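(* (1) Let $M$ be a $\mathtt{dCBN}$ term. If $M^n\to N$ in $\mathtt{dBang}$, then there is a $\mathtt{dCBN}$ term $P$ such that $M\to_n^* P$ and $N\to^* P^n$. (2) Let $M$ be a $\mathtt{dCBV}$ term. If $M^v\to N$ in $\mathtt{dBang}$, then there is a $\mathtt{dCBV}$ term $P$ such that $M\to_v^* P$ and $N\to^* P^v$.
   Context: \textbf{dBang.} Terms: $M,N ::= x \mid \lambda x.M \mid MN \mid M[N/x] \mid\ !M \mid \mathrm{der}\,M$ ($M[N/x]$ explicit substitution binding $x$); $M\{N/x\}$ capture-avoiding substitution. List contexts $L ::= \square\mid L[N/x]$. Root rules: $L\langle\lambda x.M\rangle N \mapsto L\langle M[N/x]\rangle$; $M[L\langle !N\rangle/x]\mapsto L\langle M\{N/x\}\rangle$; $\mathrm{der}(L\langle !N\rangle)\mapsto L\langle N\rangle$; $\to$ is their closure under all contexts. \textbf{dCBN, dCBV.} Common syntax $M,N::=x\mid\lambda x.M\mid MN\mid M[N/x]$; values $V::=x\mid\lambda x.M$; list contexts $L::=\square\mid L[N/x]$. $\to_n$ is the closure under all contexts of $L\langle\lambda x.M\rangle N\mapsto L\langle M[N/x]\rangle$ and $M[N/x]\mapsto M\{N/x\}$. $\to_v$ is the closure under all contexts of $L\langle\lambda x.M\rangle N\mapsto L\langle M[N/x]\rangle$ and $M[L\langle V\rangle/x]\mapsto L\langle M\{V/x\}\rangle$ for $V$ a value. \textbf{Translations.} $x^n=x$, $(\lambda x.M)^n=\lambda x.M^n$, $(MN)^n=M^n\,!N^n$,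 $(M[N/x])^n=M^n[!N^n/x]$. $x^v=!x$, $(\lambda x.M)^v=!(\lambda x.M^v)$, $(MN)^v=L\langle P\rangle N^v$ if $M^v=L\langle !P\rangle$ for a list context $L$, and $(MN)^v=\mathrm{der}(M^v)\,N^v$ otherwise; $(M[N/x])^v=M^v[N^v/x]$. *)

theory Defs
  imports Main
begin

text \<open>Terms are represented with de Bruijn indices. In an explicit substitution
  M[N/x] (constructor ES M N) the variable x is index 0 in M; N lies outside
  the binder.\<close>

datatype bterm = BVar nat | BLam bterm | BApp bterm bterm | BES bterm bterm
  | BBang bterm | BDer bterm

fun bshift :: "nat \<Rightarrow> nat \<Rightarrow> bterm \<Rightarrow> bterm" where
  "bshift d c (BVar i) = BVar (if i < c then i else i + d)"
| "bshift d c (BLam M) = BLam (bshift d (Suc c) M)"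
| "bshift d c (BApp M N) = BApp (bshift d c M) (bshift d c N)"
| "bshift d c (BES M N) = BES (bshift d (Suc c) M) (bshift d c N)"
| "bshift d c (BBang M) = BBang (bshift d c M)"
| "bshift d c (BDer M) = BDer (bshift d c M)"

text \<open>bsubst k N M: capture-avoiding substitution of N (a term in the context
  outside the k binders) for index k in M, decrementing the indices above k.\<close>
fun bsubst :: "nat \<Rightarrow> bterm \<Rightarrow> bterm \<Rightarrow> bterm" where
  "bsubst k N (BVar i) = (if i < k then BVar i else if i = k then bshift k 0 N else BVar (i - 1))"
| "bsubst k N (BLam M) = BLam (bsubst (Suc k) N M)"
| "bsubst k N (BApp M P) = BApp (bsubst k N M) (bsubst k N P)"
| "bsubst k N (BES M P) = BES (bsubst (Suc k) N M) (bsubst k N P)"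
| "bsubst k N (BBang M) = BBang (bsubst k N M)"
| "bsubst k N (BDer M) = BDer (bsubst k N M)"

text \<open>List contexts L ::= \<box> | L[N/x], as the list of the substituted terms,
  outermost first: bplug (N # L) M = (L\<langle>M\<rangle>)[N/x].\<close>
fun bplug :: "bterm list \<Rightarrow> bterm \<Rightarrow> bterm" where
  "bplug [] M = M"
| "bplug (N # L) M = BES (bplug L M) N"

inductive broot :: "bterm \<Rightarrow> bterm \<Rightarrow> bool" where
  dB: "broot (BApp (bplug L (BLam M)) N) (bplug L (BES M (bshift (length L) 0 N)))"
| sbang: "broot (BES M (bplug L (BBang N))) (bplug L (bsubst 0 N (bshift (length L) 1 M)))"
| dbang: "broot (BDer (bplug L (BBang N))) (bplug L N)"

inductive bstep :: "bterm \<Rightarrow> bterm \<Rightarrow> bool" where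
  root: "broot M N \<Longrightarrow> bstep M N"
| lam: "bstep M M' \<Longrightarrow> bstep (BLam M) (BLam M')"
| appL: "bstep M M' \<Longrightarrow> bstep (BApp M N) (BApp M' N)"
| appR: "bstep N N' \<Longrightarrow> bstep (BApp M N) (BApp M N')"
| esL: "bstep M M' \<Longrightarrow> bstep (BES M N) (BES M' N)"
| esR: "bstep N N' \<Longrightarrow> bstep (BES M N) (BES M N')"
| bang: "bstep M M' \<Longrightarrow> bstep (BBang M) (BBang M')"
| der: "bstep M M' \<Longrightarrow> bstep (BDer M) (BDer M')"

datatype lterm = Var nat | Lam lterm | App lterm lterm | ES lterm lterm

fun lshift :: "nat \<Rightarrow> nat \<Rightarrow> lterm \<Rightarrow> lterm" where
  "lshift d c (Var i) = Var (if i < c then i else i + d)"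
| "lshift d c (Lam M) = Lam (lshift d (Suc c) M)"
| "lshift d c (App M N) = App (lshift d c M) (lshift d c N)"
| "lshift d c (ES M N) = ES (lshift d (Suc c) M) (lshift d c N)"

fun lsubst :: "nat \<Rightarrow> lterm \<Rightarrow> lterm \<Rightarrow> lterm" where
  "lsubst k N (Var i) = (if i < k then Var i else if i = k then lshift k 0 N else Var (i - 1))"
| "lsubst k N (Lam M) = Lam (lsubst (Suc k) N M)"
| "lsubst k N (App M P) = App (lsubst k N M) (lsubst k N P)"
| "lsubst k N (ES M P) = ES (lsubst (Suc k) N M) (lsubst k N P)"

fun lplug :: "lterm list \<Rightarrow> lterm \<Rightarrow> lterm" where
  "lplug [] M = M"
| "lplug (N # L) M = ES (lplug L M) N"

fun is_value :: "lterm \<Rightarrow> bool" where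
  "is_value (Var _) = True"
| "is_value (Lam _) = True"
| "is_value _ = False"

inductive nroot :: "lterm \<Rightarrow> lterm \<Rightarrow> bool" where
  dB: "nroot (App (lplug L (Lam M)) N) (lplug L (ES M (lshift (length L) 0 N)))"
| s: "nroot (ES M N) (lsubst 0 N M)"

inductive vroot :: "lterm \<Rightarrow> lterm \<Rightarrow> bool" where
  dB: "vroot (App (lplug L (Lam M)) N) (lplug L (ES M (lshift (length L) 0 N)))"
| sv: "is_value V \<Longrightarrow> vroot (ES M (lplug L V)) (lplug L (lsubst 0 V (lshift (length L) 1 M)))"

inductive nstep :: "lterm \<Rightarrow> lterm \<Rightarrow> bool" where
  root: "nroot M N \<Longrightarrow> nstep M N"
| lam: "nstep M M' \<Longrightarrow> nstep (Lam M) (Lam M')"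
| appL: "nstep M M' \<Longrightarrow> nstep (App M N) (App M' N)"
| appR: "nstep N N' \<Longrightarrow> nstep (App M N) (App M N')"
| esL: "nstep M M' \<Longrightarrow> nstep (ES M N) (ES M' N)"
| esR: "nstep N N' \<Longrightarrow> nstep (ES M N) (ES M N')"

inductive vstep :: "lterm \<Rightarrow> lterm \<Rightarrow> bool" where
  root: "vroot M N \<Longrightarrow> vstep M N"
| lam: "vstep M M' \<Longrightarrow> vstep (Lam M) (Lam M')"
| appL: "vstep M M' \<Longrightarrow> vstep (App M N) (App M' N)"
| appR: "vstep N N' \<Longrightarrow> vstep (App M N) (App M N')"
| esL: "vstep M M' \<Longrightarrow> vstep (ES M N) (ES M' N)"
| esR: "vstep N N' \<Longrightarrow> vstep (ES M N) (ES M N')"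

fun tn :: "lterm \<Rightarrow> bterm" where
  "tn (Var i) = BVar i"
| "tn (Lam M) = BLam (tn M)"
| "tn (App M N) = BApp (tn M) (BBang (tn N))"
| "tn (ES M N) = BES (tn M) (BBang (tn N))"

text \<open>unbang T = Some (L\<langle>P\<rangle>) iff T = L\<langle>!P\<rangle> for a list context L (the
  decomposition is unique), and None if T has no such form.\<close>
fun unbang :: "bterm \<Rightarrow> bterm option" where
  "unbang (BBang P) = Some P"
| "unbang (BES M N) = map_option (\<lambda>Q. BES Q N) (unbang M)"
| "unbang _ = None"

fun tv :: "lterm \<Rightarrow> bterm" where
  "tv (Var i) = BBang (BVar i)"
| "tv (Lam M) = BBang (BLam (tv M))"
| "tv (App M N) = (case unbang (tv M) of
      Some Q \<Rightarrow> BApp Q (tv N)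
    | None \<Rightarrow> BApp (BDer (tv M)) (tv N))"
| "tv (ES M N) = BES (tv M) (tv N)"

end

theory Submission
  imports Defs
begin

lemma star_map:
  assumes "\<And>x y. r x y \<Longrightarrow> s (f x) (f y)" and "r\<^sup>*\<^sup>* a b"
  shows "s\<^sup>*\<^sup>* (f a) (f b)"
  using assms(2) by induction (auto intro: rtranclp.rtrancl_into_rtrancl assms(1))

inductive_cases brootE_App: "broot (BApp A B) X"
inductive_cases brootE_ES: "broot (BES A B) X"
inductive_cases brootE_Bang[elim!]: "broot (BBang A) X"
inductive_cases brootE_Lam[elim!]: "broot (BLam A) X"
inductive_cases brootE_Var[elim!]: "broot (BVar i) X"
inductive_cases brootE_Der: "broot (BDer A) X"
inductive_cases bstepE_App: "bstep (BApp A B) X"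
inductive_cases bstepE_ES: "bstep (BES A B) X"
inductive_cases bstepE_Bang: "bstep (BBang A) X"
inductive_cases bstepE_Lam: "bstep (BLam A) X"
inductive_cases bstepE_Var: "bstep (BVar i) X"
inductive_cases bstepE_Der: "bstep (BDer A) X"

lemma bshift0[simp]: "bshift 0 c T = T"
  by (induction T arbitrary: c) auto

lemma lshift0[simp]: "lshift 0 c T = T"
  by (induction T arbitrary: c) auto

section \<open>CBN\<close>

lemma tn_shift: "tn (lshift d c M) = bshift d c (tn M)"
  by (induction M arbitrary: c) auto

lemma tn_subst: "tn (lsubst k N M) = bsubst k (tn N) (tn M)"
  by (induction M arbitrary: k) (auto simp: tn_shift)

lemma tn_lplug: "tn (lplug L M) = bplug (map (\<lambda>x. BBang (tn x)) L) (tn M)"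
  by (induction L) auto

lemma tn_lam_inv:
  "tn M = bplug L (BLam X) \<Longrightarrow> \<exists>L' M'. M = lplug L' (Lam M') \<and> L = map (\<lambda>x. BBang (tn x)) L' \<and> X = tn M'"
proof (induction L arbitrary: M)
  case Nil
  then show ?case by (cases M) auto
next
  case (Cons N L)
  then obtain A B where M: "M = ES A B" and A: "tn A = bplug L (BLam X)" and N: "N = BBang (tn B)"
    by (cases M) auto
  from Cons.IH[OF A] obtain L' M' where "A = lplug L' (Lam M')" "L = map (\<lambda>x. BBang (tn x)) L'" "X = tn M'"
    by blast
  then show ?case using M N by (intro exI[of _ "B # L'"] exI[of _ M']) auto
qed

lemma bplug_Bang: "bplug L (BBang X) = BBang Y \<Longrightarrow> L = [] \<and> X = Y"
  by (cases L) auto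

lemma cbn_sim: "bstep (tn M) X \<Longrightarrow> \<exists>P. nstep M P \<and> X = tn P"
proof (induction M arbitrary: X)
  case (Var i)
  then show ?case by (auto elim: bstepE_Var)
next
  case (Lam M)
  from Lam.prems show ?case
    by (auto elim!: bstepE_Lam dest!: Lam.IH intro: nstep.lam)
next
  case (App M1 M2)
  from App.prems[simplified] show ?case
  proof (cases rule: bstepE_App[consumes 1, case_names root appL appR])
    case root
    then show ?thesis
    proof -
      obtain L M where 1: "tn M1 = bplug L (BLam M)" "X = bplug L (BES M (bshift (length L) 0 (BBang (tn M2))))"
        by (rule brootE_App[OF root]) blast
      from tn_lam_inv[OF 1(1)] obtain L' M' where
        "M1 = lplug L' (Lam M')" "L = map (\<lambda>x. BBang (tn x)) L'" "M = tn M'" by blast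
      with 1 show ?thesis
        by (intro exI[of _ "lplug L' (ES M' (lshift (length L') 0 M2))"])
           (auto intro!: nstep.root nroot.dB simp: tn_lplug tn_shift)
    qed
  next
    case (appL M')
    then show ?thesis by (auto dest!: App.IH intro: nstep.appL)
  next
    case (appR N')
    then show ?thesis by (auto elim!: bstepE_Bang dest!: App.IH intro: nstep.appR)
  qed
next
  case (ES A B)
  from ES.prems[simplified] show ?case
  proof (cases rule: bstepE_ES[consumes 1, case_names root esL esR])
    case root
    then show ?thesis
    proof -
      obtain L N where 1: "BBang (tn B) = bplug L (BBang N)" "X = bplug L (bsubst 0 N (bshift (length L) (Suc 0) (tn A)))"
        by (rule brootE_ES[OF root]) blast
      then have "L = []" "N = tn B" using bplug_Bang by metis+
      with 1 show ?thesis
        by (intro exI[of _ "lsubst 0 B A"]) (auto intro!: nstep.root nroot.s simp: tn_subst)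
    qed
  next
    case (esL M')
    then show ?thesis by (auto dest!: ES.IH intro: nstep.esL)
  next
    case (esR N')
    then show ?thesis by (auto elim!: bstepE_Bang dest!: ES.IH intro: nstep.esR)
  qed
qed


section \<open>CBV\<close>

lemma unbang_bplug: "unbang (bplug L X) = map_option (bplug L) (unbang X)"
  by (induction L) (auto simp: option.map_comp o_def option.map_ident)

lemma unbang_Some_E: "unbang T = Some Q \<Longrightarrow> \<exists>L P. T = bplug L (BBang P) \<and> Q = bplug L P"
proof (induction T arbitrary: Q)
  case (BES M N)
  then obtain Q0 where "unbang M = Some Q0" "Q = BES Q0 N" by auto
  with BES.IH(1) obtain L P where "M = bplug L (BBang P)" "Q0 = bplug L P" by blast
  with \<open>Q = BES Q0 N\<close> show ?case by (intro exI[of _ "N # L"] exI[of _ P]) auto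
qed (auto intro: exI[of _ "[]"])

lemma unbang_shift: "unbang (bshift d c T) = map_option (bshift d c) (unbang T)"
  by (induction T arbitrary: c) (auto simp: option.map_comp o_def)

lemma unbang_subst_Some: "unbang T = Some Q \<Longrightarrow> unbang (bsubst k N T) = Some (bsubst k N Q)"
  by (induction T arbitrary: k Q) auto

lemma tv_not_BES: "tv M = BES A B \<Longrightarrow> \<exists>M1 M2. M = ES M1 M2"
  by (cases M) (auto split: option.splits)

lemma unbang_tv_App: "unbang (tv (App M N)) = None"
  by (auto split: option.splits)

lemma tv_shift: "tv (lshift d c M) = bshift d c (tv M)"
  by (induction M arbitrary: c) (auto simp: unbang_shift split: option.splits)

lemma unbang_tv_None: "unbang (tv M) = None \<Longrightarrow> unbang (bsubst k N (tv M)) = None"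
  by (induction M arbitrary: k) (auto split: option.splits)

lemma unbang_tv_subst: "unbang (bsubst k N (tv M)) = map_option (bsubst k N) (unbang (tv M))"
  using unbang_tv_None[of M k N] unbang_subst_Some[of "tv M" _ k N]
  by (cases "unbang (tv M)") auto

lemma tv_subst: "tv V = BBang N \<Longrightarrow> tv (lsubst k V M) = bsubst k N (tv M)"
proof (induction M arbitrary: k)
  case (Var i)
  then show ?case by (auto simp: tv_shift)
next
  case (App M1 M2)
  then show ?case using unbang_tv_subst[of k N M1] by (auto split: option.splits)
qed auto

lemma tv_lplug: "tv (lplug L M) = bplug (map tv L) (tv M)"
  by (induction L) auto

lemma unbang_tv_Some:
  "unbang (tv M) = Some Q \<Longrightarrow> \<exists>L V N. M = lplug L V \<and> is_value V \<and> tv V = BBang N \<and> Q = bplug (map tv L) N"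
proof (induction M arbitrary: Q)
  case (Var i)
  then show ?case by (intro exI[of _ "[]"] exI[of _ "Var i"]) auto
next
  case (Lam M)
  then show ?case by (intro exI[of _ "[]"] exI[of _ "Lam M"]) auto
next
  case (App M1 M2)
  then show ?case by (auto split: option.splits)
next
  case (ES A B)
  then obtain Q0 where "unbang (tv A) = Some Q0" "Q = BES Q0 (tv B)" by auto
  with ES.IH(1) obtain L V N where "A = lplug L V" "is_value V" "tv V = BBang N" "Q0 = bplug (map tv L) N"
    by blast
  with \<open>Q = BES Q0 (tv B)\<close> show ?case by (intro exI[of _ "B # L"] exI[of _ V] exI[of _ N]) auto
qed

lemma bplug_inj:
  "(\<And>x y. A \<noteq> BES x y) \<Longrightarrow> (\<And>x y. B \<noteq> BES x y) \<Longrightarrow> bplug L1 A = bplug L2 B \<Longrightarrow> L1 = L2 \<and> A = B"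
proof (induction L1 arbitrary: L2)
  case Nil
  then show ?case by (cases L2) auto
next
  case (Cons a L1)
  show ?case
  proof (cases L2)
    case Nil
    then show ?thesis using Cons.prems by (metis bplug.simps)
  next
    case (Cons b L2')
    then show ?thesis using Cons.prems Cons.IH by auto
  qed
qed

lemma lift_step: "unbang T = Some Q \<Longrightarrow> bstep Q Y \<Longrightarrow> \<exists>T'. bstep T T' \<and> unbang T' = Some Y"
proof (induction T arbitrary: Q Y)
  case (BBang P)
  then show ?case by (auto intro: bstep.bang)
next
  case (BES M N)
  then obtain Q0 where Q0: "unbang M = Some Q0" "Q = BES Q0 N" by auto
  from BES.prems(2)[unfolded Q0(2)] show ?case
  proof (cases rule: bstepE_ES[consumes 1, case_names root esL esR])
    case root
    obtain L N0 where 1: "N = bplug L (BBang N0)" "Y = bplug L (bsubst 0 N0 (bshift (length L) (Suc 0) Q0))"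
      by (rule brootE_ES[OF root]) blast
    let ?T = "bplug L (bsubst 0 N0 (bshift (length L) (Suc 0) M))"
    have "bstep (BES M N) ?T" unfolding 1 using broot.sbang[of M L N0] by (simp add: bstep.root)
    moreover have "unbang ?T = Some Y"
      using Q0(1) 1(2) by (simp add: unbang_bplug unbang_shift unbang_subst_Some)
    ultimately show ?thesis by blast
  next
    case (esL M')
    then obtain T' where "bstep M T'" "unbang T' = Some M'" using BES.IH(1)[OF Q0(1)] by blast
    then show ?thesis using esL by (intro exI[of _ "BES T' N"]) (auto intro: bstep.esL)
  next
    case (esR N')
    then show ?thesis using Q0 by (auto intro: bstep.esR)
  qed
qed auto

lemma proj_step: "unbang T = Some Q \<Longrightarrow> bstep T T' \<Longrightarrow> \<exists>Y. bstep Q Y \<and> unbang T' = Some Y"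
proof (induction T arbitrary: Q T')
  case (BBang P)
  then show ?case by (auto elim!: bstepE_Bang intro: bstep.bang)
next
  case (BES M N)
  then obtain Q0 where Q0: "unbang M = Some Q0" "Q = BES Q0 N" by auto
  from BES.prems(2) show ?case
  proof (cases rule: bstepE_ES[consumes 1, case_names root esL esR])
    case root
    obtain L N0 where 1: "N = bplug L (BBang N0)" "T' = bplug L (bsubst 0 N0 (bshift (length L) (Suc 0) M))"
      by (rule brootE_ES[OF root]) blast
    let ?Y = "bplug L (bsubst 0 N0 (bshift (length L) (Suc 0) Q0))"
    have "bstep Q ?Y" unfolding 1 Q0 using broot.sbang[of Q0 L N0] by (simp add: bstep.root)
    moreover have "unbang T' = Some ?Y"
      using Q0(1) 1(2) by (simp add: unbang_bplug unbang_shift unbang_subst_Some)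
    ultimately show ?thesis by blast
  next
    case (esL M')
    then obtain Y where "bstep Q0 Y" "unbang M' = Some Y" using BES.IH(1)[OF Q0(1)] by blast
    then show ?thesis using esL Q0 by (intro exI[of _ "BES Y N"]) (auto intro: bstep.esL)
  next
    case (esR N')
    then show ?thesis using Q0 by (auto intro: bstep.esR)
  qed
qed auto

lemma proj_steps: "bstep\<^sup>*\<^sup>* T T' \<Longrightarrow> unbang T = Some Q \<Longrightarrow> \<exists>Y. bstep\<^sup>*\<^sup>* Q Y \<and> unbang T' = Some Y"
proof (induction rule: rtranclp_induct)
  case base
  then show ?case by auto
next
  case (step y z)
  then obtain Y where "bstep\<^sup>*\<^sup>* Q Y" "unbang y = Some Y" by blast
  with proj_step[OF this(2) step(2)] show ?case by (meson rtranclp.rtrancl_into_rtrancl)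
qed


lemma vstar_appL: "vstep\<^sup>*\<^sup>* M M' \<Longrightarrow> vstep\<^sup>*\<^sup>* (App M N) (App M' N)"
  by (rule star_map[where f = "\<lambda>x. App x N"]) (auto intro: vstep.appL)

lemma bstar_appL: "bstep\<^sup>*\<^sup>* M M' \<Longrightarrow> bstep\<^sup>*\<^sup>* (BApp M N) (BApp M' N)"
  by (rule star_map[where f = "\<lambda>x. BApp x N"]) (auto intro: bstep.appL)

lemma bplug_Lam_not_Der: "bplug L (BLam M) \<noteq> BDer X"
  by (cases L) auto

lemma value_tv: "is_value V \<Longrightarrow> tv V = BBang N \<Longrightarrow> (\<forall>x y. N \<noteq> BES x y)"
  by (cases V) auto

lemma cbv_sim: "bstep (tv M) X \<Longrightarrow> \<exists>P. vstep\<^sup>*\<^sup>* M P \<and> bstep\<^sup>*\<^sup>* X (tv P)"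
proof (induction M arbitrary: X)
  case (Var i)
  then show ?case by (auto elim!: bstepE_Bang bstepE_Var)
next
  case (Lam M)
  from Lam.prems obtain Y where X: "X = BBang (BLam Y)" "bstep (tv M) Y"
    by (auto elim!: bstepE_Bang bstepE_Lam)
  from Lam.IH[OF X(2)] obtain P where "vstep\<^sup>*\<^sup>* M P" "bstep\<^sup>*\<^sup>* Y (tv P)" by blast
  then show ?case unfolding X
    by (intro exI[of _ "Lam P"]) (auto intro: star_map[where f = Lam] star_map[where f = "\<lambda>x. BBang (BLam x)"] vstep.lam bstep.lam bstep.bang)
next
  case (ES A B)
  from ES.prems[simplified] show ?case
  proof (cases rule: bstepE_ES[consumes 1, case_names root esL esR])
    case root
    obtain L N where 1: "tv B = bplug L (BBang N)" "X = bplug L (bsubst 0 N (bshift (length L) (Suc 0) (tv A)))"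
      by (rule brootE_ES[OF root]) blast
    have "unbang (tv B) = Some (bplug L N)" unfolding 1 by (simp add: unbang_bplug)
    from unbang_tv_Some[OF this] obtain L' V N' where 2: "B = lplug L' V" "is_value V" "tv V = BBang N'"
      by blast
    have "bplug (map tv L') (BBang N') = bplug L (BBang N)" using 1(1) 2 by (simp add: tv_lplug)
    from bplug_inj[OF _ _ this] have 3: "L = map tv L'" "N = N'" by auto
    let ?P = "lplug L' (lsubst 0 V (lshift (length L') 1 A))"
    have "vstep (ES A B) ?P" unfolding 2 by (intro vstep.root vroot.sv 2)
    moreover have "X = tv ?P" using 1 2 3 by (simp add: tv_lplug tv_subst tv_shift)
    ultimately show ?thesis by blast
  next
    case (esL M')
    then obtain P where "vstep\<^sup>*\<^sup>* A P" "bstep\<^sup>*\<^sup>* M' (tv P)" using ES.IH(1) by blast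
    then show ?thesis using esL
      by (intro exI[of _ "ES P B"]) (auto intro: star_map[where f = "\<lambda>x. ES x B"] star_map[where f = "\<lambda>x. BES x (tv B)"] vstep.esL bstep.esL)
  next
    case (esR N')
    then obtain P where "vstep\<^sup>*\<^sup>* B P" "bstep\<^sup>*\<^sup>* N' (tv P)" using ES.IH(2) by blast
    then show ?thesis using esR
      by (intro exI[of _ "ES A P"]) (auto intro: star_map[where f = "\<lambda>x. ES A x"] star_map[where f = "\<lambda>x. BES (tv A) x"] vstep.esR bstep.esR)
  qed
next
  case (App M1 M2)
  have appRc: ?case if X: "X = BApp F N'" "bstep (tv M2) N'" and F: "tv (App M1 M2) = BApp F (tv M2)" for F N'
  proof -
    obtain P where "vstep\<^sup>*\<^sup>* M2 P" "bstep\<^sup>*\<^sup>* N' (tv P)" using App.IH(2) X(2) by blast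
    moreover have "tv (App M1 P) = BApp F (tv P)" using F by (auto split: option.splits)
    ultimately show ?case unfolding X
      by (intro exI[of _ "App M1 P"]) (auto intro: star_map[where f = "\<lambda>x. App M1 x"] star_map[where f = "\<lambda>x. BApp F x"] vstep.appR bstep.appR)
  qed
  show ?case
  proof (cases "unbang (tv M1)")
    case None
    then have tvA: "tv (App M1 M2) = BApp (BDer (tv M1)) (tv M2)" by simp
    from App.prems[unfolded tvA] show ?thesis
    proof (cases rule: bstepE_App[consumes 1, case_names root appL appR])
      case root
      then show ?thesis by (auto elim!: brootE_App simp: bplug_Lam_not_Der[symmetric])
    next
      case (appL Y)
      from appL(2) show ?thesis
      proof (cases rule: bstepE_Der[consumes 1, case_names root der])
        case root
        then show ?thesis using None by (auto elim!: brootE_Der simp: unbang_bplug)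
      next
        case (der Y')
        obtain P1 where P1: "vstep\<^sup>*\<^sup>* M1 P1" "bstep\<^sup>*\<^sup>* Y' (tv P1)" using App.IH(1) der(2) by blast
        have s1: "bstep\<^sup>*\<^sup>* X (BApp (BDer (tv P1)) (tv M2))" unfolding appL der
          using P1(2) by (auto intro: star_map[where f = "\<lambda>x. BApp (BDer x) (tv M2)"] bstep.appL bstep.der)
        have s2: "bstep\<^sup>*\<^sup>* (BApp (BDer (tv P1)) (tv M2)) (tv (App P1 M2))"
        proof (cases "unbang (tv P1)")
          case None
          then show ?thesis by simp
        next
          case (Some Q)
          from unbang_Some_E[OF this] obtain L P where "tv P1 = bplug L (BBang P)" "Q = bplug L P" by blast
          then have "bstep (BApp (BDer (tv P1)) (tv M2)) (BApp Q (tv M2))"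
            using bstep.appL[OF bstep.root[OF broot.dbang[of L P]], of "tv M2"] by simp
          then show ?thesis using Some by simp
        qed
        show ?thesis using vstar_appL[OF P1(1)] rtranclp_trans[OF s1 s2] by blast
      qed
    next
      case (appR N')
      show ?thesis using appRc[OF appR tvA] .
    qed
  next
    case (Some Q)
    then have tvA: "tv (App M1 M2) = BApp Q (tv M2)" by simp
    from App.prems[unfolded tvA] show ?thesis
    proof (cases rule: bstepE_App[consumes 1, case_names root appL appR])
      case root
      obtain L Mb where 1: "Q = bplug L (BLam Mb)" "X = bplug L (BES Mb (bshift (length L) 0 (tv M2)))"
        by (rule brootE_App[OF root]) blast
      from unbang_tv_Some[OF Some] obtain L' V N where 2: "M1 = lplug L' V" "is_value V" "tv V = BBang N"
        "Q = bplug (map tv L') N" by blast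
      have "bplug (map tv L') N = bplug L (BLam Mb)" using 1 2 by simp
      from bplug_inj[OF _ _ this] value_tv[OF 2(2,3)] have 3: "L = map tv L'" "N = BLam Mb" by auto
      then obtain M' where V: "V = Lam M'" "Mb = tv M'" using 2(2,3) by (cases V) auto
      let ?P = "lplug L' (ES M' (lshift (length L') 0 M2))"
      have "vstep (App M1 M2) ?P" unfolding 2 V by (intro vstep.root vroot.dB)
      moreover have "X = tv ?P" using 1 3 V by (simp add: tv_lplug tv_shift)
      ultimately show ?thesis by blast
    next
      case (appL Y)
      obtain T' where T': "bstep (tv M1) T'" "unbang T' = Some Y" using lift_step[OF Some appL(2)] by blast
      obtain P1 where P1: "vstep\<^sup>*\<^sup>* M1 P1" "bstep\<^sup>*\<^sup>* T' (tv P1)" using App.IH(1) T'(1) by blast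
      obtain Y1 where Y1: "bstep\<^sup>*\<^sup>* Y Y1" "unbang (tv P1) = Some Y1" using proj_steps[OF P1(2) T'(2)] by blast
      have "bstep\<^sup>*\<^sup>* X (tv (App P1 M2))" unfolding appL(1) using Y1
        using bstar_appL[OF Y1(1)] Y1(2) by simp
      then show ?thesis using vstar_appL[OF P1(1)] by blast
    next
      case (appR N')
      show ?thesis using appRc[OF appR tvA] .
    qed
  qed
qed

theorem mainTheorem7:
  shows "(\<forall>M N. bstep (tn M) N \<longrightarrow>
            (\<exists>P. nstep\<^sup>*\<^sup>* M P \<and> bstep\<^sup>*\<^sup>* N (tn P)))
       \<and> (\<forall>M N. bstep (tv M) N \<longrightarrow>
            (\<exists>P. vstep\<^sup>*\<^sup>* M P \<and> bstep\<^sup>*\<^sup>* N (tv P)))"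
  using cbn_sim cbv_sim by blast

end
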